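(* The ballean $(\omega,\mathfrak{M}_\omega)$ does not have bounded growth.
   Context: A ballean $(X,\mathcal{E})$ is a set with a coarse structure. $E[x]=\{y:(x,y)\in E\}$. $Y$ is bounded if $Y\subseteq E[x]$ for some $x$ and $E\in\mathcal{E}$; $\mathcal{B}_X$ is the family of bounded sets. $(X,\mathcal{E})$ has bounded growth if there is a map $f:X\to\mathcal{B}_X$ such that $\bigcup_{x\in B}f(x)\in\mathcal{B}_X$ for every $B\in\mathcal{B}_X$, and for every $E\in\mathcal{E}$ there is $C\in\mathcal{B}_X$ with $E[x]\subseteq f(x)$ for all $x\in X\setminus C$. $\mathfrak{M}_\omega$ is the coarse structure on $\omega$ with base $\{M_{\mathcal{P}}\}$, where $\mathcal{P}$ ranges over coverings of $\omega$ by finite sets such that for each $x\in\omega$ the set $\bigcup\{P'\in\mathcal{P}:x\in P'\}$ is finite, and $M_{\mathcal{P}}=\{(x,y):x,y\in P\text{ for some }P\in\mathcal{P}\}$; its bounded sets are the finite subsets of $\omega$. *)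

theory Defs
  imports Main
begin

definition ball_of :: "('a \<times> 'a) set \<Rightarrow> 'a \<Rightarrow> 'a set" where
  "ball_of E x = {y. (x, y) \<in> E}"

definition bounded_in :: "'a set \<Rightarrow> ('a \<times> 'a) set set \<Rightarrow> 'a set \<Rightarrow> bool" where
  "bounded_in X \<E> Y \<longleftrightarrow> (\<exists>x\<in>X. \<exists>E\<in>\<E>. Y \<subseteq> ball_of E x)"

definition has_bounded_growth :: "'a set \<Rightarrow> ('a \<times> 'a) set set \<Rightarrow> bool" where
  "has_bounded_growth X \<E> \<longleftrightarrow>
     (\<exists>f. (\<forall>x\<in>X. f x \<subseteq> X \<and> bounded_in X \<E> (f x)) \<and>
          (\<forall>B. B \<subseteq> X \<and> bounded_in X \<E> B \<longrightarrow> bounded_in X \<E> (\<Union>x\<in>B. f x)) \<and>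
          (\<forall>E\<in>\<E>. \<exists>C. C \<subseteq> X \<and> bounded_in X \<E> C \<and>
                    (\<forall>x\<in>X - C. ball_of E x \<subseteq> f x)))"

definition admissible_cover :: "nat set set \<Rightarrow> bool" where
  "admissible_cover \<P> \<longleftrightarrow> \<Union>\<P> = UNIV \<and> (\<forall>P\<in>\<P>. finite P) \<and>
     (\<forall>x. finite (\<Union>{P\<in>\<P>. x \<in> P}))"

definition M_cover :: "nat set set \<Rightarrow> (nat \<times> nat) set" where
  "M_cover \<P> = {(x, y). \<exists>P\<in>\<P>. x \<in> P \<and> y \<in> P}"

text \<open>The coarse structure M_omega: generated by the base {M_P}, i.e. all
  entourages contained in some M_P.\<close>
definition M_omega :: "(nat \<times> nat) set set" where
  "M_omega = {E. \<exists>\<P>. admissible_cover \<P> \<and> E \<subseteq> M_cover \<P>}"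

end

theory Submission
  imports Defs
begin

lemma bounded_finite:
  assumes "bounded_in (UNIV::nat set) M_omega Y"
  shows "finite Y"
proof -
  obtain x E where E: "E \<in> M_omega" "Y \<subseteq> ball_of E x"
    using assms unfolding bounded_in_def by blast
  then obtain \<P> where P: "admissible_cover \<P>" "E \<subseteq> M_cover \<P>"
    unfolding M_omega_def by blast
  have "ball_of E x \<subseteq> \<Union>{P\<in>\<P>. x \<in> P}"
    using P(2) unfolding ball_of_def M_cover_def by blast
  moreover have "finite (\<Union>{P\<in>\<P>. x \<in> P})"
    using P(1) unfolding admissible_cover_def by blast
  ultimately show ?thesis using E(2) by (meson finite_subset subset_trans)
qed

theorem mainTheorem12:
  shows "\<not> has_bounded_growth (UNIV :: nat set) M_omega"
proof
  assume "has_bounded_growth (UNIV :: nat set) M_omega"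
  then obtain f where F: "(\<forall>x\<in>(UNIV::nat set). f x \<subseteq> UNIV \<and> bounded_in UNIV M_omega (f x)) \<and>
          (\<forall>B. B \<subseteq> UNIV \<and> bounded_in UNIV M_omega B \<longrightarrow> bounded_in UNIV M_omega (\<Union>x\<in>B. f x)) \<and>
          (\<forall>E\<in>M_omega. \<exists>C. C \<subseteq> UNIV \<and> bounded_in UNIV M_omega C \<and>
                    (\<forall>x\<in>UNIV - C. ball_of E x \<subseteq> f x))"
    unfolding has_bounded_growth_def by (rule exE)
  have f1: "\<forall>x. bounded_in UNIV M_omega (f x)" using F by simp
  have f3: "\<forall>E\<in>M_omega. \<exists>C. bounded_in UNIV M_omega C \<and> (\<forall>x\<in>UNIV - C. ball_of E x \<subseteq> f x)"
    using F by simp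
  have fin: "finite (f x)" for x using f1 bounded_finite by blast
  define g where "g x = (LEAST y. y > x \<and> y \<notin> f x)" for x
  have gex: "\<exists>y. y > x \<and> y \<notin> f x" for x
  proof -
    have "infinite {y. y > x}" using infinite_Ioi[of x] by (simp add: greaterThan_def)
    then have "\<not> ({y. y > x} \<subseteq> f x)" using fin finite_subset by blast
    then show ?thesis by blast
  qed
  have g: "g x > x \<and> g x \<notin> f x" for x
    unfolding g_def using LeastI_ex[OF gex[of x]] .
  define \<P> where "\<P> = range (\<lambda>x. {x, g x})"
  have adm: "admissible_cover \<P>"
    unfolding admissible_cover_def
  proof (intro conjI allI ballI)
    show "\<Union>\<P> = UNIV" unfolding \<P>_def by blast
    show "finite P" if "P \<in> \<P>" for P using that unfolding \<P>_def by auto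
    fix x
    have "\<Union>{P\<in>\<P>. x \<in> P} \<subseteq> {..x} \<union> {g x}"
    proof
      fix y assume "y \<in> \<Union>{P\<in>\<P>. x \<in> P}"
      then obtain z where z: "x \<in> {z, g z}" "y \<in> {z, g z}" unfolding \<P>_def by auto
      show "y \<in> {..x} \<union> {g x}"
      proof (cases "x = z")
        case True then show ?thesis using z by auto
      next
        case False
        then have "x = g z" using z by auto
        then have "z < x" using g[of z] by simp
        then show ?thesis using z \<open>x = g z\<close> by auto
      qed
    qed
    then show "finite (\<Union>{P\<in>\<P>. x \<in> P})" by (rule finite_subset) simp
  qed
  have "M_cover \<P> \<in> M_omega" unfolding M_omega_def using adm by blast
  then obtain C where C: "bounded_in UNIV M_omega C" "\<forall>x\<in>UNIV - C. ball_of (M_cover \<P>) x \<subseteq> f x"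
    using f3 by blast
  have "finite C" using C(1) bounded_finite by blast
  then obtain x where "x \<notin> C" using ex_new_if_finite[of C] by auto
  then have "ball_of (M_cover \<P>) x \<subseteq> f x" using C(2) by blast
  moreover have "g x \<in> ball_of (M_cover \<P>) x"
  proof -
    have "{x, g x} \<in> \<P>" unfolding \<P>_def by simp
    then show ?thesis unfolding ball_of_def M_cover_def by blast
  qed
  ultimately have "g x \<in> f x" by (rule subsetD)
  then show False using g[of x] by simp
qed

end
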